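(* Assume $X_0\in L^\infty$, $x\in\mathbb{R}$, and let $z\ge\frac{x}{\mathrm{E}[\rho]}-Q_0(1)$. If $X^*$ is variance-minimal in $\mathscr{X}_{\mathrm{icx}}(x,X_0+z)$, then $\psi(X^* )=z$.
   Context: $(\Omega,\mathcal{F},\mathbb{P})$ is a complete nonatomic probability space. $\rho\in L^2$ with $\mathbb{P}(\rho>0)=1$ and $\mathrm{Var}[\rho]>0$. For a random variable $X$, $Q_X(t)=\inf\{y:\mathbb{P}(X\le y)>t\}$ for $t\in[0,1)$, $Q_X(1):=\lim_{t\uparrow1}Q_X(t)$; $Q_0:=Q_{X_0}$. For random variables $X,Y$, $X\succeq_{\mathrm{icx}}Y$ means $\mathrm{E}[f(X)]\ge\mathrm{E}[f(Y)]$ for all increasing convex $f$ (equivalently $\int_t^1Q_X\ge\int_t^1Q_Y$ for all $t\in[0,1]$). $\mathscr{X}_{\mathrm{icx}}(x,Y_0)=\{X\in L^2:\mathrm{E}[\rho X]\le x,\ X\succeq_{\mathrm{icx}}Y_0\}$, and $X$ is variance-minimal in it if it minimizes $\mathrm{Var}[X]$ over it. The beating performance of $X\in L^2$ is $\psi(X)=\sup\{m\in\mathbb{R}: X-m\succeq_{\mathrm{icx}}X_0\}$ (with $\sup\emptyset=-\infty$). *)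

theory Defs
  imports "HOL-Probability.Probability"
begin

definition nonatomic :: "'a measure \<Rightarrow> bool" where
  "nonatomic M \<longleftrightarrow> \<not> (\<exists>A\<in>sets M. measure M A > 0 \<and>
      (\<forall>B\<in>sets M. B \<subseteq> A \<longrightarrow> measure M B = 0 \<or> measure M B = measure M A))"

definition L2 :: "'a measure \<Rightarrow> ('a \<Rightarrow> real) set" where
  "L2 M = {X. X \<in> borel_measurable M \<and> integrable M (\<lambda>\<omega>. (X \<omega>)\<^sup>2)}"

definition Linf :: "'a measure \<Rightarrow> ('a \<Rightarrow> real) set" where
  "Linf M = {X. X \<in> borel_measurable M \<and> (\<exists>C. AE \<omega> in M. \<bar>X \<omega>\<bar> \<le> C)}"

definition quantile :: "'a measure \<Rightarrow> ('a \<Rightarrow> real) \<Rightarrow> real \<Rightarrow> real" where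
  "quantile M X t = Inf {y. measure M {\<omega>\<in>space M. X \<omega> \<le> y} > t}"

definition quantile_one :: "'a measure \<Rightarrow> ('a \<Rightarrow> real) \<Rightarrow> real" where
  "quantile_one M X = Lim (at_left 1) (quantile M X)"

text \<open>For integrable X, Y and increasing convex f, E[f(X)] lies in (-\<infinity>, +\<infinity>]
  and is +\<infinity> exactly when f \<circ> X is not integrable; the inequality in the
  extended reals is spelled out accordingly.\<close>
definition icx_ge :: "'a measure \<Rightarrow> ('a \<Rightarrow> real) \<Rightarrow> ('a \<Rightarrow> real) \<Rightarrow> bool" where
  "icx_ge M X Y \<longleftrightarrow> (\<forall>f::real \<Rightarrow> real. mono f \<and> convex_on UNIV f \<longrightarrow>
      (\<not> integrable M (\<lambda>\<omega>. f (X \<omega>)) \<or>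
       (integrable M (\<lambda>\<omega>. f (Y \<omega>)) \<and>
        integral\<^sup>L M (\<lambda>\<omega>. f (Y \<omega>)) \<le> integral\<^sup>L M (\<lambda>\<omega>. f (X \<omega>)))))"

definition X_icx :: "'a measure \<Rightarrow> ('a \<Rightarrow> real) \<Rightarrow> real \<Rightarrow> ('a \<Rightarrow> real) \<Rightarrow> ('a \<Rightarrow> real) set" where
  "X_icx M \<rho> x Y0 = {X \<in> L2 M. integral\<^sup>L M (\<lambda>\<omega>. \<rho> \<omega> * X \<omega>) \<le> x \<and> icx_ge M X Y0}"

definition variance_minimal :: "'a measure \<Rightarrow> ('a \<Rightarrow> real) set \<Rightarrow> ('a \<Rightarrow> real) \<Rightarrow> bool" where
  "variance_minimal M S X \<longleftrightarrow> X \<in> S \<and>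
     (\<forall>Y\<in>S. prob_space.variance M X \<le> prob_space.variance M Y)"

definition beating_perf :: "'a measure \<Rightarrow> ('a \<Rightarrow> real) \<Rightarrow> ('a \<Rightarrow> real) \<Rightarrow> ereal" where
  "beating_perf M X0 X = Sup (ereal ` {m. icx_ge M (\<lambda>\<omega>. X \<omega> - m) X0})"

end

theory Submission
  imports Defs
begin

lemma L2_integrable:
  assumes "prob_space M" "X \<in> L2 M" shows "integrable M X"
proof -
  interpret prob_space M by fact
  show ?thesis using assms(2) unfolding L2_def
    by (auto intro!: square_integrable_imp_integrable)
qed

lemma L2_mult_integrable:
  assumes "X \<in> L2 M" "Y \<in> L2 M" shows "integrable M (\<lambda>w. X w * Y w)"
proof (rule Bochner_Integration.integrable_bound)
  show "integrable M (\<lambda>w. (X w)\<^sup>2 + (Y w)\<^sup>2)" using assms unfolding L2_def by auto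
  show "(\<lambda>w. X w * Y w) \<in> borel_measurable M" using assms unfolding L2_def by auto
  show "AE w in M. norm (X w * Y w) \<le> norm ((X w)\<^sup>2 + (Y w)\<^sup>2)"
  proof (rule AE_I2)
    fix w
    have "2 * \<bar>X w\<bar> * \<bar>Y w\<bar> \<le> (X w)\<^sup>2 + (Y w)\<^sup>2"
      using sum_squares_bound[of "\<bar>X w\<bar>" "\<bar>Y w\<bar>"] by (simp add: power2_eq_square)
    moreover have "0 \<le> (X w)\<^sup>2 + (Y w)\<^sup>2" by simp
    moreover have "0 \<le> \<bar>X w\<bar> * \<bar>Y w\<bar>" by simp
    ultimately show "norm (X w * Y w) \<le> norm ((X w)\<^sup>2 + (Y w)\<^sup>2)"
      by (simp only: real_norm_def abs_mult)
  qed
qed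

lemma L2_affine:
  assumes "prob_space M" "X \<in> L2 M" shows "(\<lambda>w. a * X w + b) \<in> L2 M"
proof -
  interpret prob_space M by fact
  have i: "integrable M X" using L2_integrable assms by blast
  have "integrable M (\<lambda>w. a\<^sup>2 * (X w)\<^sup>2 + (2*a*b) * X w + b\<^sup>2)"
    using assms(2) i unfolding L2_def by auto
  moreover have "(\<lambda>w. a\<^sup>2 * (X w)\<^sup>2 + (2*a*b) * X w + b\<^sup>2) = (\<lambda>w. (a * X w + b)\<^sup>2)"
    by (auto simp: power2_eq_square algebra_simps)
  ultimately show ?thesis using assms(2) unfolding L2_def by auto
qed

lemma var_affine_L2:
  assumes "prob_space M" "X \<in> L2 M"
  shows "prob_space.variance M (\<lambda>w. a * X w + b) = a\<^sup>2 * prob_space.variance M X"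
proof -
  interpret prob_space M by fact
  have i: "integrable M X" using L2_integrable assms by blast
  have e: "expectation (\<lambda>w. a * X w + b) = a * expectation X + b"
    using i by (simp add: prob_space)
  have "(\<lambda>w. (a * X w + b - expectation (\<lambda>w. a * X w + b))\<^sup>2) = (\<lambda>w. a\<^sup>2 * (X w - expectation X)\<^sup>2)"
    by (subst e) (simp add: power2_eq_square algebra_simps)
  then show ?thesis by simp
qed

lemma convex_affine_comp:
  fixes f :: "real \<Rightarrow> real"
  assumes "convex_on UNIV f" "a \<ge> 0"
  shows "convex_on UNIV (\<lambda>t. f (a * t + b))"
  unfolding convex_on_def
proof (intro conjI allI impI ballI)
  fix x y u v :: real assume uv: "0 \<le> u" "0 \<le> v" "u + v = 1"
  have "a * (u *\<^sub>R x + v *\<^sub>R y) + b = u *\<^sub>R (a * x + b) + v *\<^sub>R (a * y + b)"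
    using uv by (simp add: algebra_simps) (metis distrib_left mult.right_neutral)
  then show "f (a * (u *\<^sub>R x + v *\<^sub>R y) + b) \<le> u * f (a * x + b) + v * f (a * y + b)"
    using assms(1) uv unfolding convex_on_def by simp
qed simp

lemma icx_shift:
  assumes "icx_ge M A Y"
  shows "icx_ge M (\<lambda>w. A w + s) (\<lambda>w. Y w + s)"
  unfolding icx_ge_def
proof (intro allI impI)
  fix f :: "real \<Rightarrow> real" assume f: "mono f \<and> convex_on UNIV f"
  let ?g = "\<lambda>t. f (t + s)"
  have "mono ?g" using f by (auto simp: mono_def)
  moreover have "convex_on UNIV ?g"
    using f convex_affine_comp[of f 1 s] by simp
  ultimately show "\<not> integrable M (\<lambda>w. f (A w + s)) \<or>
    integrable M (\<lambda>w. f (Y w + s)) \<and> integral\<^sup>L M (\<lambda>w. f (Y w + s)) \<le> integral\<^sup>L M (\<lambda>w. f (A w + s))"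
    using assms unfolding icx_ge_def by blast
qed


lemma icx_mix:
  assumes P: "prob_space M" and H: "icx_ge M A Y" and Ym: "Y \<in> borel_measurable M"
    and C: "AE w in M. \<bar>Y w\<bar> \<le> C" and c: "AE w in M. Y w + z \<le> c"
    and l: "0 \<le> l" "l \<le> 1"
  shows "icx_ge M (\<lambda>w. l * (A w + z) + (1 - l) * c) (\<lambda>w. Y w + z)"
  unfolding icx_ge_def
proof (intro allI impI)
  interpret prob_space M by fact
  fix f :: "real \<Rightarrow> real" assume f: "mono f \<and> convex_on UNIV f"
  define g where "g = (\<lambda>t. f (l * t + (l * z + (1 - l) * c)))"
  have gm: "mono g" using f l unfolding g_def mono_def
    by (metis add_le_cancel_right mult_left_mono)
  have gc: "convex_on UNIV g" unfolding g_def using f l convex_affine_comp by blast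
  have eq: "(\<lambda>w. f (l * (A w + z) + (1 - l) * c)) = (\<lambda>w. g (A w))"
    unfolding g_def by (simp add: algebra_simps)
  have fcont: "continuous_on UNIV f" using f convex_on_continuous[OF open_UNIV] by blast
  have fmeas: "(\<lambda>w. f (Y w + z)) \<in> borel_measurable M"
    using measurable_compose[OF _ borel_measurable_continuous_onI[OF fcont], of "\<lambda>w. Y w + z" M] Ym
    by auto
  have fint: "integrable M (\<lambda>w. f (Y w + z))"
  proof (rule Bochner_Integration.integrable_bound)
    show "integrable M (\<lambda>w. \<bar>f (- C + z)\<bar> + \<bar>f (C + z)\<bar>)" by simp
    show "(\<lambda>w. f (Y w + z)) \<in> borel_measurable M" by (rule fmeas)
    show "AE w in M. norm (f (Y w + z)) \<le> norm (\<bar>f (- C + z)\<bar> + \<bar>f (C + z)\<bar>)"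
      using C
    proof eventually_elim
      case (elim w)
      have "f (- C + z) \<le> f (Y w + z)" "f (Y w + z) \<le> f (C + z)"
        using elim f unfolding mono_def by auto
      then show ?case by auto
    qed
  qed
  show "\<not> integrable M (\<lambda>w. f (l * (A w + z) + (1 - l) * c)) \<or>
     integrable M (\<lambda>w. f (Y w + z)) \<and>
     integral\<^sup>L M (\<lambda>w. f (Y w + z)) \<le> integral\<^sup>L M (\<lambda>w. f (l * (A w + z) + (1 - l) * c))"
  proof (cases "integrable M (\<lambda>w. f (l * (A w + z) + (1 - l) * c))")
    case True
    then have "integrable M (\<lambda>w. g (A w))" using eq by simp
    then have gi: "integrable M (\<lambda>w. g (Y w))" and gle: "integral\<^sup>L M (\<lambda>w. g (Y w)) \<le> integral\<^sup>L M (\<lambda>w. g (A w))"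
      using H gm gc unfolding icx_ge_def by blast+
    have "integral\<^sup>L M (\<lambda>w. f (Y w + z)) \<le> integral\<^sup>L M (\<lambda>w. g (Y w))"
    proof (rule integral_mono_AE[OF fint gi])
      show "AE w in M. f (Y w + z) \<le> g (Y w)"
        using c
      proof eventually_elim
        case (elim w)
        have "(1 - l) * (Y w + z) \<le> (1 - l) * c" using elim l by (intro mult_left_mono) auto
        then have "Y w + z \<le> l * Y w + (l * z + (1 - l) * c)" by (simp add: algebra_simps)
        then show ?case unfolding g_def using f unfolding mono_def by blast
      qed
    qed
    then show ?thesis using fint gle eq by simp
  qed simp
qed


lemma quantile_one_le:
  assumes P: "prob_space M" and Xm[measurable]: "X \<in> borel_measurable M"
    and B: "AE w in M. X w \<le> B" and C: "AE w in M. \<bar>X w\<bar> \<le> C"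
  shows "quantile_one M X \<le> B"
proof -
  interpret prob_space M by fact
  define S where "S t = {y. measure M {w\<in>space M. X w \<le> y} > t}" for t
  have Q: "quantile M X t = Inf (S t)" for t unfolding quantile_def S_def by simp
  have BS: "B \<in> S t" if "t < 1" for t
  proof -
    have "measure M {w\<in>space M. X w \<le> B} = 1"
      using prob_Collect_eq_1[of "\<lambda>w. X w \<le> B"] B by simp
    then show ?thesis using that unfolding S_def by simp
  qed
  have low: "- C \<le> y" if "0 \<le> t" "y \<in> S t" for t y
  proof (rule ccontr)
    assume "\<not> - C \<le> y"
    then have "AE w in M. \<not> X w \<le> y" using C \<open>\<not> - C \<le> y\<close> by (auto elim!: AE_mp)
    then have "measure M {w\<in>space M. X w \<le> y} = 0"
      using prob_Collect_eq_0[of "\<lambda>w. X w \<le> y"] by simp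
    then show False using that unfolding S_def by simp
  qed
  have bb: "bdd_below (S t)" if "0 \<le> t" for t
    using low[OF that] by (intro bdd_belowI[of _ "- C"]) auto
  have QB: "quantile M X t \<le> B" if "0 \<le> t" "t < 1" for t
    unfolding Q using bb[OF that(1)] BS[OF that(2)] by (rule cInf_lower[rotated])
  have mono: "quantile M X s \<le> quantile M X t" if "0 \<le> s" "s \<le> t" "t < 1" for s t
    unfolding Q
  proof (rule cInf_superset_mono)
    show "S t \<noteq> {}" using BS[OF that(3)] by blast
    show "bdd_below (S s)" using bb[OF that(1)] .
    show "S t \<subseteq> S s" using that unfolding S_def by auto
  qed
  define l where "l = (SUP t\<in>{0..<1}. quantile M X t)"
  have ba: "bdd_above (quantile M X ` {0..<1})" using QB by (intro bdd_aboveI[of _ B]) auto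
  have "(quantile M X \<longlongrightarrow> l) (at_left 1)"
  proof (rule increasing_tendsto)
    show "\<forall>\<^sub>F n in at_left 1. quantile M X n \<le> l"
      using eventually_at_left_real[of 0 "1::real", simplified]
      by eventually_elim (auto simp: l_def intro!: cSUP_upper ba)
    fix x assume "x < l"
    then obtain t0 where t0: "t0 \<in> {0..<1}" "x < quantile M X t0"
      unfolding l_def using less_cSUP_iff[OF _ ba] by auto
    have "t0 < 1" using t0 by simp
    show "\<forall>\<^sub>F n in at_left 1. x < quantile M X n"
      using eventually_at_left_real[OF \<open>t0 < 1\<close>]
    proof eventually_elim
      case (elim t)
      then show ?case using mono[of t0 t] t0 by auto
    qed
  qed
  then have "quantile_one M X = l"
    unfolding quantile_one_def by (rule tendsto_Lim[OF trivial_limit_at_left_real])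
  also have "l \<le> B" unfolding l_def using QB by (auto intro!: cSUP_least)
  finally show ?thesis .
qed


lemma pos_part_convex: "convex_on UNIV (\<lambda>t::real. max (t - a) 0)"
  unfolding convex_on_def
proof (intro conjI allI impI ballI)
  fix x y u v :: real assume uv: "0 \<le> u" "0 \<le> v" "u + v = 1"
  have "u * (x - a) \<le> u * max (x - a) 0" "v * (y - a) \<le> v * max (y - a) 0"
    using uv by (auto intro: mult_left_mono)
  moreover have "0 \<le> u * max (x - a) 0" "0 \<le> v * max (y - a) 0" using uv by auto
  moreover have "u *\<^sub>R x + v *\<^sub>R y - a = u * (x - a) + v * (y - a)"
    using uv by (simp add: algebra_simps) (metis mult.right_neutral distrib_left)
  ultimately show "max (u *\<^sub>R x + v *\<^sub>R y - a) 0 \<le> u * max (x - a) 0 + v * max (y - a) 0"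
    by simp
qed simp

lemma pos_part_mono: "mono (\<lambda>t::real. max (t - a) 0)"
  by (auto simp: mono_def)

theorem proposition8p2:
  fixes M :: "'a measure" and \<rho> X0 Xs :: "'a \<Rightarrow> real" and x z :: real
  assumes "prob_space M" and "complete_measure M" and "nonatomic M"
    and "\<rho> \<in> L2 M" and "AE \<omega> in M. \<rho> \<omega> > 0" and "prob_space.variance M \<rho> > 0"
    and "X0 \<in> Linf M"
    and "z \<ge> x / prob_space.expectation M \<rho> - quantile_one M X0"
    and "variance_minimal M (X_icx M \<rho> x (\<lambda>\<omega>. X0 \<omega> + z)) Xs"
  shows "beating_perf M X0 Xs = ereal z"
proof -
  interpret prob_space M by fact
  have P: "prob_space M" by fact
  have XsL2: "Xs \<in> L2 M" and bud: "integral\<^sup>L M (\<lambda>w. \<rho> w * Xs w) \<le> x"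
    and icxs: "icx_ge M Xs (\<lambda>w. X0 w + z)"
    and minv: "\<And>Y. Y \<in> X_icx M \<rho> x (\<lambda>\<omega>. X0 \<omega> + z) \<Longrightarrow> variance Xs \<le> variance Y"
    using assms(9) unfolding variance_minimal_def X_icx_def by auto
  have Xsm[measurable]: "Xs \<in> borel_measurable M" using XsL2 unfolding L2_def by auto
  have X0m[measurable]: "X0 \<in> borel_measurable M" using assms(7) unfolding Linf_def by auto
  obtain C where C: "AE w in M. \<bar>X0 w\<bar> \<le> C" using assms(7) unfolding Linf_def by auto
  have rhoi: "integrable M \<rho>" using L2_integrable[OF P assms(4)] .
  have rhom[measurable]: "\<rho> \<in> borel_measurable M" using rhoi by auto
  have Erho: "expectation \<rho> > 0"
  proof -
    have ge: "0 \<le> expectation \<rho>" using assms(5) by (intro integral_nonneg_AE) (auto elim!: AE_mp)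
    have "expectation \<rho> \<noteq> 0"
    proof
      assume "expectation \<rho> = 0"
      moreover have "AE w in M. 0 \<le> \<rho> w" using assms(5) by (auto elim!: AE_mp)
      ultimately have "AE w in M. \<rho> w = 0"
        using integral_nonneg_eq_0_iff_AE[OF rhoi] by simp
      with assms(5) have "AE w in M. False" by eventually_elim auto
      then show False by simp
    qed
    with ge show ?thesis by simp
  qed
  have rXi: "integrable M (\<lambda>w. \<rho> w * Xs w)" using L2_mult_integrable[OF assms(4) XsL2] .
  have Xsi: "integrable M Xs" using L2_integrable[OF P XsL2] .
  have up: "m \<le> z" if H: "icx_ge M (\<lambda>w. Xs w - m) X0" for m
  proof (rule ccontr)
    assume mz: "\<not> m \<le> z"
    have var0: "variance Xs = 0"
    proof (rule ccontr)
      assume "variance Xs \<noteq> 0"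
      moreover have "variance Xs \<ge> 0" by (intro integral_nonneg_AE) auto
      ultimately have vpos: "variance Xs > 0" by linarith
      define E where "E = expectation \<rho>"
      define \<delta> where "\<delta> = m - z"
      define c where "c = C + z"
      define D where "D = \<bar>c * E - x\<bar>"
      define K where "K = D + 1 + \<delta> * E"
      define l where "l = (D + 1) / K"
      define b where "b = l * (z - m) + (1 - l) * c"
      have dpos: "\<delta> > 0" using mz by (simp add: \<delta>_def)
      have Epos: "E > 0" using Erho by (simp add: E_def)
      have Dnn: "D \<ge> 0" by (simp add: D_def)
      have Kpos: "K > 0" using mult_pos_pos[OF dpos Epos] Dnn by (simp add: K_def)
      have lK: "l * K = D + 1" using Kpos by (simp add: l_def)
      have l1K: "(1 - l) * K = \<delta> * E" using lK by (simp add: K_def algebra_simps)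
      have l0: "0 < l" using Kpos Dnn by (simp add: l_def)
      have "0 < (1 - l) * K" using l1K mult_pos_pos[OF dpos Epos] by simp
      then have l1: "l < 1" using Kpos by (simp add: zero_less_mult_iff)
      have icx: "icx_ge M (\<lambda>w. l * Xs w + b) (\<lambda>w. X0 w + z)"
      proof -
        have "AE w in M. X0 w + z \<le> c" using C by eventually_elim (auto simp: c_def)
        from icx_mix[OF P H X0m C this, of l] l0 l1
        have "icx_ge M (\<lambda>w. l * (Xs w - m + z) + (1 - l) * c) (\<lambda>w. X0 w + z)" by simp
        moreover have "(\<lambda>w. l * (Xs w - m + z) + (1 - l) * c) = (\<lambda>w. l * Xs w + b)"
          by (auto simp: b_def algebra_simps)
        ultimately show ?thesis by simp
      qed
      have L2n: "(\<lambda>w. l * Xs w + b) \<in> L2 M" using L2_affine[OF P XsL2] .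
      have "integral\<^sup>L M (\<lambda>w. \<rho> w * (l * Xs w + b)) = l * integral\<^sup>L M (\<lambda>w. \<rho> w * Xs w) + b * E"
      proof -
        have "(\<lambda>w. \<rho> w * (l * Xs w + b)) = (\<lambda>w. l * (\<rho> w * Xs w) + b * \<rho> w)"
          by (auto simp: algebra_simps)
        then show ?thesis using rXi rhoi by (simp add: E_def)
      qed
      also have "\<dots> \<le> l * x + b * E" using bud l0 by simp
      also have "\<dots> \<le> x"
      proof -
        have a: "(1 - l) * (c * E - x) \<le> (1 - l) * D"
          using l1 by (intro mult_left_mono) (auto simp: D_def)
        have "(1 - l) * D * K = D * ((1 - l) * K)" by (simp add: ac_simps)
        also have "\<dots> = D * (\<delta> * E)" using l1K by simp
        also have "\<dots> \<le> (D + 1) * (\<delta> * E)"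
          using mult_pos_pos[OF dpos Epos] by (intro mult_right_mono) auto
        also have "\<dots> = (l * K) * (\<delta> * E)" using lK by simp
        also have "\<dots> = l * \<delta> * E * K" by (simp add: ac_simps)
        finally have "(1 - l) * D * K \<le> l * \<delta> * E * K" .
        then have "(1 - l) * D \<le> l * \<delta> * E" using Kpos by simp
        with a have "(1 - l) * (c * E - x) \<le> l * \<delta> * E" by linarith
        then show ?thesis by (simp add: b_def \<delta>_def algebra_simps)
      qed
      finally have "(\<lambda>w. l * Xs w + b) \<in> X_icx M \<rho> x (\<lambda>\<omega>. X0 \<omega> + z)"
        unfolding X_icx_def using L2n icx by simp
      from minv[OF this] have "variance Xs \<le> l\<^sup>2 * variance Xs"
        using var_affine_L2[OF P XsL2] by simp
      moreover have "l\<^sup>2 < 1" using l0 l1 by (simp add: power_less_one_iff abs_less_iff)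
      ultimately show False using vpos by (metis mult_less_cancel_right2 not_le)
    qed
    define k where "k = expectation Xs"
    have sqi: "integrable M (\<lambda>w. (Xs w - k)\<^sup>2)"
      using L2_affine[OF P XsL2, of 1 "- k"] unfolding L2_def by simp
    have "AE w in M. (Xs w - k)\<^sup>2 = 0"
      using integral_nonneg_eq_0_iff_AE[OF sqi] var0 by (simp add: k_def)
    then have Xk: "AE w in M. Xs w = k" by eventually_elim simp
    let ?f = "\<lambda>t::real. max (t - (k - m)) 0"
    have i0: "integrable M (\<lambda>w. ?f (Xs w - m))"
      by (rule integrable_cong_AE_imp[of _ "\<lambda>w. 0"]) (use Xk in \<open>auto elim!: AE_mp\<close>)
    have "integrable M (\<lambda>w. ?f (X0 w)) \<and> integral\<^sup>L M (\<lambda>w. ?f (X0 w)) \<le> integral\<^sup>L M (\<lambda>w. ?f (Xs w - m))"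
      using H i0 pos_part_mono pos_part_convex unfolding icx_ge_def by blast
    moreover have "integral\<^sup>L M (\<lambda>w. ?f (Xs w - m)) = integral\<^sup>L M (\<lambda>w. 0)"
      by (rule integral_cong_AE) (use Xk in \<open>auto elim!: AE_mp\<close>)
    ultimately have fi: "integrable M (\<lambda>w. ?f (X0 w))" and "integral\<^sup>L M (\<lambda>w. ?f (X0 w)) \<le> 0"
      by auto
    moreover have "integral\<^sup>L M (\<lambda>w. ?f (X0 w)) \<ge> 0" by (intro integral_nonneg_AE) auto
    ultimately have "integral\<^sup>L M (\<lambda>w. ?f (X0 w)) = 0" by simp
    then have "AE w in M. ?f (X0 w) = 0" using integral_nonneg_eq_0_iff_AE[OF fi] by simp
    then have "AE w in M. X0 w \<le> k - m" by eventually_elim auto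
    from quantile_one_le[OF P X0m this C] have Q: "quantile_one M X0 \<le> k - m" .
    have "integral\<^sup>L M (\<lambda>w. \<rho> w * Xs w) = integral\<^sup>L M (\<lambda>w. \<rho> w * k)"
      by (rule integral_cong_AE) (use Xk in \<open>auto elim!: AE_mp\<close>)
    also have "\<dots> = k * expectation \<rho>" by simp
    finally have "k * expectation \<rho> \<le> x" using bud by simp
    then have "k \<le> x / expectation \<rho>" using Erho by (simp add: pos_le_divide_eq)
    then show False using assms(8) Q mz by linarith
  qed
  have zin: "icx_ge M (\<lambda>w. Xs w - z) X0"
    using icx_shift[OF icxs, of "- z"] by simp
  show ?thesis
    unfolding beating_perf_def
  proof (rule antisym)
    show "Sup (ereal ` {m. icx_ge M (\<lambda>w. Xs w - m) X0}) \<le> ereal z"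
      using up by (auto intro!: Sup_least)
    show "ereal z \<le> Sup (ereal ` {m. icx_ge M (\<lambda>w. Xs w - m) X0})"
      using zin by (auto intro!: Sup_upper)
  qed
qed

end
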